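(* Consider timing binary modulation with $T_b=1/R$: a transmitter molecule released at $s\in\{0,T_b/2\}$ (equiprobable bits) arrives at $s+t(r_\ell)$; let $z=z_{T_b/2}$ be the number of interfering molecules arriving in $[0,T_b/2]$, independent of $s$ and of $t(r_\ell)$, with mean $\mu$ and variance $\sigma^2>0$. For an integer $n\ge0$, the receiver decides $s=0$ iff the $(n+1)$th arriving molecule (counting interfering molecules and the transmitter's molecule) arrives no later than $T_b/2$. Let $\hat P_{b,\ell}=\frac12\Pr\{t(r_\ell)>T_b/2\}$ and assume $\hat P_{b,\ell}<\frac12$. Then the bit error rate is exactly $$P^\star_{b,\ell}(n)=\hat P_{b,\ell}\Pr\{z=n\}+\tfrac12\big(1-\Pr\{z=n\}\big).$$ If $\Pr\{z=n\}$ is replaced by the continuity-corrected Gaussian approximation $\Pr\{n-\tfrac12<Z<n+\tfrac12\}$ with $Z\sim\mathcal{N}(\mu,\sigma^2)$, the resulting expression, viewed as a function of real $n$, is minimized at $n=\mu$, with minimum value $$\frac12\Big[1+\big(2\hat P_{b,\ell}-1\big)\Big(1-2Q\Big(\frac{1}{2\sigma}\Big)\Big)\Big].$$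
   Context: $Q(x)=\frac{1}{\sqrt{2\pi}}\int_x^\infty e^{-u^2/2}du$ is the Gaussian tail function. $t(r_\ell)$ denotes the first passage time of the transmitter's molecule to the receiver, a positive random variable independent of $s$; with release time $T_b/2$ the molecule arrives strictly after $T_b/2$. *)

theory Defs
  imports "HOL-Probability.Probability"
begin

definition Qfun :: "real \<Rightarrow> real" where
  "Qfun x = (1 / sqrt (2 * pi)) * (LBINT u:{x..}. exp (- (u\<^sup>2) / 2))"

definition num_arrivals ::
  "real \<Rightarrow> ('a \<Rightarrow> nat) \<Rightarrow> ('a \<Rightarrow> real) \<Rightarrow> ('a \<Rightarrow> real) \<Rightarrow> 'a \<Rightarrow> nat" where
  "num_arrivals Tb z s t \<omega> = z \<omega> + (if s \<omega> + t \<omega> \<le> Tb / 2 then 1 else 0)"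

text \<open>The receiver decides s = 0 iff the (n+1)-th arriving molecule arrives no later
  than Tb/2, i.e. iff at least n+1 molecules arrive in [0, Tb/2].\<close>
definition decides_zero ::
  "real \<Rightarrow> nat \<Rightarrow> ('a \<Rightarrow> nat) \<Rightarrow> ('a \<Rightarrow> real) \<Rightarrow> ('a \<Rightarrow> real) \<Rightarrow> 'a \<Rightarrow> bool" where
  "decides_zero Tb n z s t \<omega> \<longleftrightarrow> n + 1 \<le> num_arrivals Tb z s t \<omega>"

definition bit_error_rate ::
  "'a measure \<Rightarrow> real \<Rightarrow> nat \<Rightarrow> ('a \<Rightarrow> nat) \<Rightarrow> ('a \<Rightarrow> real) \<Rightarrow> ('a \<Rightarrow> real) \<Rightarrow> real" where
  "bit_error_rate M Tb n z s t =
     measure M {\<omega> \<in> space M. decides_zero Tb n z s t \<omega> \<noteq> (s \<omega> = 0)}"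

definition Phat :: "'a measure \<Rightarrow> real \<Rightarrow> ('a \<Rightarrow> real) \<Rightarrow> real" where
  "Phat M Tb t = 1 / 2 * measure M {\<omega> \<in> space M. t \<omega> > Tb / 2}"

definition gauss_prob :: "real \<Rightarrow> real \<Rightarrow> real \<Rightarrow> real" where
  "gauss_prob \<mu> \<sigma> x = measure (density lborel (normal_density \<mu> \<sigma>)) {x - 1/2 <..< x + 1/2}"

definition approx_ber :: "real \<Rightarrow> real \<Rightarrow> real \<Rightarrow> real \<Rightarrow> real" where
  "approx_ber P \<mu> \<sigma> x = P * gauss_prob \<mu> \<sigma> x + 1 / 2 * (1 - gauss_prob \<mu> \<sigma> x)"

end

theory Submission
  imports Defs
begin


lemma gp_int:
  "gauss_prob \<mu> \<sigma> x = (\<integral>u. normal_density \<mu> \<sigma> u * indicator {x-1/2<..<x+1/2} u \<partial>lborel)"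
proof -
  have "gauss_prob \<mu> \<sigma> x = (\<integral>u. indicator {x-1/2<..<x+1/2} u \<partial>density lborel (normal_density \<mu> \<sigma>))"
    unfolding gauss_prob_def by simp
  also have "\<dots> = (\<integral>u. normal_density \<mu> \<sigma> u *\<^sub>R indicator {x-1/2<..<x+1/2} u \<partial>lborel)"
    by (rule integral_density) auto
  finally show ?thesis by simp
qed

lemma nd_mono:
  assumes "\<sigma> > 0" "\<bar>u - \<mu>\<bar> \<le> \<bar>v - \<mu>\<bar>"
  shows "normal_density \<mu> \<sigma> v \<le> normal_density \<mu> \<sigma> u"
proof -
  have "(u-\<mu>)\<^sup>2 \<le> (v-\<mu>)\<^sup>2" using assms(2)
    by (metis abs_le_square_iff)
  then have "-(v - \<mu>)\<^sup>2/ (2 * \<sigma>\<^sup>2) \<le> -(u - \<mu>)\<^sup>2/ (2 * \<sigma>\<^sup>2)"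
    using assms(1) by (intro divide_right_mono) auto
  then show ?thesis unfolding normal_density_def
    by (intro mult_left_mono) auto
qed

lemma nd_refl: "normal_density \<mu> \<sigma> (2*\<mu> - v) = normal_density \<mu> \<sigma> v"
  unfolding normal_density_def by (simp add: power2_eq_square algebra_simps)

lemma int_ind: "\<sigma> > 0 \<Longrightarrow> A \<in> sets borel \<Longrightarrow> integrable lborel (\<lambda>u. normal_density \<mu> \<sigma> u * indicator A u)"
  by (rule integrable_real_mult_indicator) (auto intro: integrable_normal_density)

lemma reflect:
  "(\<integral>u. normal_density \<mu> \<sigma> u * indicator A u \<partial>lborel)
   = (\<integral>u. normal_density \<mu> \<sigma> u * indicator ((\<lambda>v. 2*\<mu> - v) ` A) u \<partial>lborel)"
proof -
  have "(\<integral>u. normal_density \<mu> \<sigma> u * indicator A u \<partial>lborel)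
     = \<bar>-1\<bar> *\<^sub>R (\<integral>v. normal_density \<mu> \<sigma> (2*\<mu> + -1 * v) * indicator A (2*\<mu> + -1 * v) \<partial>lborel)"
    by (rule lborel_integral_real_affine) simp
  also have "\<dots> = (\<integral>u. normal_density \<mu> \<sigma> u * indicator ((\<lambda>v. 2*\<mu> - v) ` A) u \<partial>lborel)"
  proof -
    have "indicator A (2*\<mu> + -1 * v) = (indicator ((\<lambda>v. 2*\<mu> - v) ` A) v :: real)" for v
    proof -
      have "(2*\<mu> + -1 * v \<in> A) = (v \<in> (\<lambda>v. 2*\<mu> - v) ` A)"
        by (auto simp: image_iff) (metis add.commute diff_add_cancel uminus_add_conv_diff)
      then show ?thesis by (simp add: indicator_def)
    qed
    then show ?thesis by (simp add: nd_refl)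
  qed
  finally show ?thesis .
qed

lemma window_ge:
  assumes "\<sigma> > 0" "\<mu> \<le> x"
  shows "gauss_prob \<mu> \<sigma> x \<le> gauss_prob \<mu> \<sigma> \<mu>"
proof -
  define f where "f = normal_density \<mu> \<sigma>"
  define I where "I A = (\<integral>u. f u * indicator A u \<partial>lborel)" for A
  have fi: "A \<in> sets borel \<Longrightarrow> integrable lborel (\<lambda>u. f u * indicator A u)" for A
    unfolding f_def using assms(1) by (rule int_ind)
  have ii: "indicator {\<mu>-1/2<..<\<mu>+1/2} u + indicator {\<mu>+1/2..<x+1/2} u
      = (indicator {\<mu>-1/2<..x-1/2} u + indicator {x-1/2<..<x+1/2} u :: real)" for u
    using assms(2) by (simp add: indicator_def, linarith)
  have pw: "f u * indicator {\<mu>-1/2<..<\<mu>+1/2} u + f u * indicator {\<mu>+1/2..<x+1/2} u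
        = f u * indicator {\<mu>-1/2<..x-1/2} u + f u * indicator {x-1/2<..<x+1/2} u" for u
    using ii[of u] by (metis distrib_left)
  have "I {\<mu>-1/2<..<\<mu>+1/2} + I {\<mu>+1/2..<x+1/2}
      = (\<integral>u. f u * indicator {\<mu>-1/2<..<\<mu>+1/2} u + f u * indicator {\<mu>+1/2..<x+1/2} u \<partial>lborel)"
    unfolding I_def by (rule Bochner_Integration.integral_add[symmetric]) (rule fi, simp)+
  also have "\<dots> = (\<integral>u. f u * indicator {\<mu>-1/2<..x-1/2} u + f u * indicator {x-1/2<..<x+1/2} u \<partial>lborel)"
    by (simp only: pw)
  also have "\<dots> = I {\<mu>-1/2<..x-1/2} + I {x-1/2<..<x+1/2}"
    unfolding I_def by (rule Bochner_Integration.integral_add) (rule fi, simp)+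
  finally have eq: "I {\<mu>-1/2<..<\<mu>+1/2} + I {\<mu>+1/2..<x+1/2} = I {\<mu>-1/2<..x-1/2} + I {x-1/2<..<x+1/2}" .
  have "I {\<mu>+1/2..<x+1/2} = \<bar>1\<bar> *\<^sub>R (\<integral>w. f (1 + 1 * w) * indicator {\<mu>+1/2..<x+1/2} (1 + 1*w) \<partial>lborel)"
    unfolding I_def by (rule lborel_integral_real_affine) simp
  also have "\<dots> = (\<integral>w. f (1 + w) * indicator {\<mu>-1/2..<x-1/2} w \<partial>lborel)"
  proof -
    have "indicator {\<mu>+1/2..<x+1/2} (1 + w) = (indicator {\<mu>-1/2..<x-1/2} w :: real)" for w
      by (auto simp: indicator_def)
    then show ?thesis by simp
  qed
  also have "\<dots> \<le> I {\<mu>-1/2<..x-1/2}"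
    unfolding I_def
  proof (rule integral_mono_AE)
    show "integrable lborel (\<lambda>w. f (1 + w) * indicator {\<mu>-1/2..<x-1/2} w)"
    proof -
      have "integrable lborel (\<lambda>w. f (1 + 1 * w) * indicator {\<mu>+1/2..<x+1/2} (1 + 1*w))"
        by (rule lborel_integrable_real_affine[OF fi]) auto
      moreover have "indicator {\<mu>+1/2..<x+1/2} (1 + w) = (indicator {\<mu>-1/2..<x-1/2} w :: real)" for w
        by (auto simp: indicator_def)
      ultimately show ?thesis by simp
    qed
    show "integrable lborel (\<lambda>u. f u * indicator {\<mu>-1/2<..x-1/2} u)" by (rule fi) simp
    show "AE w in lborel. f (1 + w) * indicator {\<mu>-1/2..<x-1/2} w \<le> f w * indicator {\<mu>-1/2<..x-1/2} w"
      using AE_lborel_singleton[of "\<mu>-1/2"]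
    proof eventually_elim
      case (elim w)
      show ?case
      proof (cases "w \<in> {\<mu>-1/2..<x-1/2}")
        case True
        with elim have "w \<in> {\<mu>-1/2<..x-1/2}" by auto
        moreover have "f (1 + w) \<le> f w" unfolding f_def
          using True elim assms(1) by (intro nd_mono) auto
        ultimately show ?thesis using True by simp
      next
        case False
        then show ?thesis by (simp add: f_def)
      qed
    qed
  qed
  finally have "I {\<mu>+1/2..<x+1/2} \<le> I {\<mu>-1/2<..x-1/2}" .
  with eq have "I {x-1/2<..<x+1/2} \<le> I {\<mu>-1/2<..<\<mu>+1/2}" by linarith
  then show ?thesis unfolding gp_int I_def f_def .
qed



lemma s: "(\<sigma>::real) > 0 \<Longrightarrow> sqrt (2*pi*\<sigma>\<^sup>2) = sqrt (2*pi) * \<sigma>" by (simp add: real_sqrt_mult)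
lemma a: "(\<sigma>::real) > 0 \<Longrightarrow> \<sigma> * normal_density \<mu> \<sigma> (\<mu> + \<sigma> * v) = 1/sqrt(2*pi) * exp (-(v\<^sup>2)/2)"
  unfolding normal_density_def by (simp add: s power_mult_distrib)
lemma b: "(\<sigma>::real) > 0 \<Longrightarrow> indicator {\<mu>+1/2..} (\<mu> + \<sigma> * v) = (indicator {1/(2*\<sigma>)..} v :: real)"
proof -
  assume "\<sigma> > 0"
  then have "(\<mu>+1/2 \<le> \<mu> + \<sigma> * v) = (1/(2*\<sigma>) \<le> v)"
    by (simp add: field_simps)
  then show ?thesis by (simp add: indicator_def)
qed
lemma c: "(\<sigma>::real) > 0 \<Longrightarrow> (\<integral>v. \<sigma> * (normal_density \<mu> \<sigma> (\<mu> + \<sigma> * v) * indicator {\<mu>+1/2..} (\<mu> + \<sigma> * v)) \<partial>lborel) = 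
  (\<integral>v. 1/sqrt(2*pi) * (indicator {1/(2*\<sigma>)..} v *\<^sub>R exp (-(v\<^sup>2)/2)) \<partial>lborel)"
proof -
  assume h: "\<sigma> > 0"
  have "\<sigma> * (normal_density \<mu> \<sigma> (\<mu> + \<sigma> * v) * indicator {\<mu>+1/2..} (\<mu> + \<sigma> * v)) = 1/sqrt(2*pi) * (indicator {1/(2*\<sigma>)..} v *\<^sub>R exp (-(v\<^sup>2)/2))" for v
    using a[OF h, of \<mu> v] b[OF h, of \<mu> v] by (simp only: mult.assoc[symmetric] real_scaleR_def) (simp add: mult_ac)
  then show ?thesis by simp
qed
lemma d: "(\<integral>v. 1/sqrt(2*pi) * (indicator {x..} v *\<^sub>R exp (-(v\<^sup>2)/2)) \<partial>lborel) = Qfun x"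
    unfolding Qfun_def set_lebesgue_integral_def by (rule integral_mult_right_zero)

lemma upper_tail:
  assumes "\<sigma> > 0"
  shows "(\<integral>u. normal_density \<mu> \<sigma> u * indicator {\<mu>+1/2..} u \<partial>lborel) = Qfun (1/(2*\<sigma>))"
proof -
  have "(\<integral>u. normal_density \<mu> \<sigma> u * indicator {\<mu>+1/2..} u \<partial>lborel)
     = \<bar>\<sigma>\<bar> *\<^sub>R (\<integral>v. normal_density \<mu> \<sigma> (\<mu> + \<sigma> * v) * indicator {\<mu>+1/2..} (\<mu> + \<sigma> * v) \<partial>lborel)"
    by (rule lborel_integral_real_affine) (use assms in simp)
  also have "\<dots> = (\<integral>v. \<sigma> * (normal_density \<mu> \<sigma> (\<mu> + \<sigma> * v) * indicator {\<mu>+1/2..} (\<mu> + \<sigma> * v)) \<partial>lborel)"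
    using assms by (simp only: real_scaleR_def abs_of_pos integral_mult_right_zero)
  also have "\<dots> = Qfun (1/(2*\<sigma>))" using c[OF assms] d by simp
  finally show ?thesis .
qed

lemma refl_atMost: "(\<lambda>v. 2*(\<mu>::real) - v) ` {..\<mu>-1/2} = {\<mu>+1/2..}"
proof -
  have "x \<in> (\<lambda>v. 2*\<mu> - v) ` {..\<mu>-1/2}" if "x \<ge> \<mu>+1/2" for x
    by (rule image_eqI[where x="2*\<mu> - x"]) (use that in auto)
  then show ?thesis by auto
qed

lemma refl_win: "(\<lambda>v. 2*(\<mu>::real) - v) ` {x-1/2<..<x+1/2} = {(2*\<mu>-x)-1/2<..<(2*\<mu>-x)+1/2}"
proof -
  have "y \<in> (\<lambda>v. 2*\<mu> - v) ` {x-1/2<..<x+1/2}" if "y \<in> {(2*\<mu>-x)-1/2<..<(2*\<mu>-x)+1/2}" for y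
    by (rule image_eqI[where x="2*\<mu> - y"]) (use that in auto)
  then show ?thesis by auto
qed

lemma center:
  assumes "\<sigma> > 0"
  shows "gauss_prob \<mu> \<sigma> \<mu> = 1 - 2 * Qfun (1/(2*\<sigma>))"
proof -
  define f where "f = normal_density \<mu> \<sigma>"
  have fi: "A \<in> sets borel \<Longrightarrow> integrable lborel (\<lambda>u. f u * indicator A u)" for A
    unfolding f_def using assms by (rule int_ind)
  have pw: "f u = f u * indicator {..\<mu>-1/2} u + f u * indicator {\<mu>-1/2<..<\<mu>+1/2} u
     + f u * indicator {\<mu>+1/2..} u" for u
    by (auto simp: indicator_def)
  have "1 = (\<integral>u. f u \<partial>lborel)" unfolding f_def using assms by simp
  also have "\<dots> = (\<integral>u. f u * indicator {..\<mu>-1/2} u \<partial>lborel)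
      + (\<integral>u. f u * indicator {\<mu>-1/2<..<\<mu>+1/2} u \<partial>lborel)
      + (\<integral>u. f u * indicator {\<mu>+1/2..} u \<partial>lborel)"
    apply (subst pw)
    apply (subst Bochner_Integration.integral_add)
      apply (intro Bochner_Integration.integrable_add fi; simp)
     apply (intro fi; simp)
    apply (subst Bochner_Integration.integral_add)
      apply (intro fi; simp)
     apply (intro fi; simp)
    apply simp
    done
  also have "(\<integral>u. f u * indicator {..\<mu>-1/2} u \<partial>lborel) = Qfun (1/(2*\<sigma>))"
    unfolding f_def by (subst reflect) (simp add: refl_atMost upper_tail assms)
  also have "(\<integral>u. f u * indicator {\<mu>+1/2..} u \<partial>lborel) = Qfun (1/(2*\<sigma>))"
    unfolding f_def by (simp add: upper_tail assms)
  finally show ?thesis unfolding gp_int f_def by linarith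
qed

lemma window_max:
  assumes "\<sigma> > 0"
  shows "gauss_prob \<mu> \<sigma> x \<le> gauss_prob \<mu> \<sigma> \<mu>"
proof (cases "\<mu> \<le> x")
  case True then show ?thesis using window_ge assms by blast
next
  case False
  have "gauss_prob \<mu> \<sigma> x = gauss_prob \<mu> \<sigma> (2*\<mu> - x)"
    unfolding gp_int by (subst reflect) (simp only: refl_win)
  also have "\<dots> \<le> gauss_prob \<mu> \<sigma> \<mu>" using False assms by (intro window_ge) auto
  finally show ?thesis .
qed



lemma ber:
  fixes M :: "'a measure" and R Tb :: real and n :: nat
    and z :: "'a \<Rightarrow> nat" and s t :: "'a \<Rightarrow> real"
  assumes "prob_space M"
    and "R > 0" and "Tb = 1 / R"
    and sm: "s \<in> borel_measurable M" and tm: "t \<in> borel_measurable M"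
    and zm: "z \<in> measurable M (count_space UNIV)"
    and sv: "\<forall>\<omega>\<in>space M. s \<omega> = 0 \<or> s \<omega> = Tb / 2"
    and s0: "measure M {\<omega> \<in> space M. s \<omega> = 0} = 1 / 2"
    and tpos: "\<forall>\<omega>\<in>space M. t \<omega> > 0"
    and ist: "prob_space.indep_var M borel s borel t"
    and iz: "\<forall>A B. B \<in> sets (borel :: (real \<times> real) measure) \<longrightarrow>
           measure M {\<omega> \<in> space M. z \<omega> \<in> A \<and> (s \<omega>, t \<omega>) \<in> B}
           = measure M {\<omega> \<in> space M. z \<omega> \<in> A} * measure M {\<omega> \<in> space M. (s \<omega>, t \<omega>) \<in> B}"
  shows "bit_error_rate M Tb n z s t =
           Phat M Tb t * measure M {\<omega> \<in> space M. z \<omega> = n}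
           + 1 / 2 * (1 - measure M {\<omega> \<in> space M. z \<omega> = n})"
proof -
  interpret P: prob_space M by fact
  have Tb: "Tb > 0" using assms(2,3) by simp
  have zs: "{\<omega> \<in> space M. P (z \<omega>)} \<in> sets M" for P
  proof -
    have "z -` {k. P k} \<inter> space M \<in> sets M" by (rule measurable_sets[OF zm]) simp
    moreover have "z -` {k. P k} \<inter> space M = {\<omega> \<in> space M. P (z \<omega>)}" by auto
    ultimately show ?thesis by simp
  qed
  have ss: "{\<omega> \<in> space M. P (s \<omega>)} \<in> sets M" if "{x. P x} \<in> sets borel" for P
  proof -
    have "s -` {k. P k} \<inter> space M \<in> sets M" by (rule measurable_sets[OF sm that])
    moreover have "s -` {k. P k} \<inter> space M = {\<omega> \<in> space M. P (s \<omega>)}" by auto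
    ultimately show ?thesis by simp
  qed
  have ts: "{\<omega> \<in> space M. P (t \<omega>)} \<in> sets M" if "{x. P x} \<in> sets borel" for P
  proof -
    have "t -` {k. P k} \<inter> space M \<in> sets M" by (rule measurable_sets[OF tm that])
    moreover have "t -` {k. P k} \<inter> space M = {\<omega> \<in> space M. P (t \<omega>)}" by auto
    ultimately show ?thesis by simp
  qed
  define A1 where "A1 = {\<omega> \<in> space M. z \<omega> < n} \<inter> {\<omega> \<in> space M. s \<omega> = 0}"
  define A2 where "A2 = {\<omega> \<in> space M. z \<omega> = n} \<inter> ({\<omega> \<in> space M. s \<omega> = 0} \<inter> {\<omega> \<in> space M. t \<omega> > Tb/2})"
  define A3 where "A3 = {\<omega> \<in> space M. n < z \<omega>} \<inter> {\<omega> \<in> space M. s \<omega> \<noteq> 0}"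
  have s0s: "{\<omega> \<in> space M. s \<omega> = 0} \<in> sets M" by (rule ss) simp
  have s1s: "{\<omega> \<in> space M. s \<omega> \<noteq> 0} \<in> sets M"
  proof (rule ss)
    have "{x::real. x \<noteq> 0} = -{0}" by auto
    then show "{x::real. x \<noteq> 0} \<in> sets borel" by simp
  qed
  have tts: "{\<omega> \<in> space M. t \<omega> > Tb/2} \<in> sets M"
  proof (rule ts)
    have "{x::real. x > Tb/2} = {Tb/2<..}" by auto
    then show "{x::real. x > Tb/2} \<in> sets borel" by simp
  qed
  have A1s: "A1 \<in> sets M" unfolding A1_def by (intro sets.Int zs s0s)
  have A2s: "A2 \<in> sets M" unfolding A2_def by (intro sets.Int zs s0s tts)
  have A3s: "A3 \<in> sets M" unfolding A3_def by (intro sets.Int zs s1s)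
  have E: "{\<omega> \<in> space M. decides_zero Tb n z s t \<omega> \<noteq> (s \<omega> = 0)} = A1 \<union> A2 \<union> A3"
  proof (rule set_eqI)
    fix \<omega>
    show "\<omega> \<in> {\<omega> \<in> space M. decides_zero Tb n z s t \<omega> \<noteq> (s \<omega> = 0)} \<longleftrightarrow> \<omega> \<in> A1 \<union> A2 \<union> A3"
    proof (cases "\<omega> \<in> space M")
      case True
      then have t: "t \<omega> > 0" and sv': "s \<omega> = 0 \<or> s \<omega> = Tb/2" using tpos sv by auto
      show ?thesis
      proof (cases "s \<omega> = 0")
        case True
        with \<open>\<omega> \<in> space M\<close> show ?thesis
          unfolding A1_def A2_def A3_def decides_zero_def num_arrivals_def
          by (cases "t \<omega> \<le> Tb/2") auto
      next
        case False
        with sv' have "s \<omega> = Tb/2" by simp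
        with False t \<open>\<omega> \<in> space M\<close> show ?thesis
          unfolding A1_def A2_def A3_def decides_zero_def num_arrivals_def
          by auto
      qed
    next
      case False then show ?thesis unfolding A1_def A2_def A3_def by auto
    qed
  qed
  have d12: "A1 \<inter> A2 = {}" "(A1 \<union> A2) \<inter> A3 = {}" unfolding A1_def A2_def A3_def by auto
  have mE: "bit_error_rate M Tb n z s t = measure M A1 + measure M A2 + measure M A3"
    unfolding bit_error_rate_def E
    using A1s A2s A3s d12 by (simp add: P.finite_measure_Union)
  define pl where "pl = measure M {\<omega> \<in> space M. z \<omega> < n}"
  define pe where "pe = measure M {\<omega> \<in> space M. z \<omega> = n}"
  define pg where "pg = measure M {\<omega> \<in> space M. n < z \<omega>}"
  define pt where "pt = measure M {\<omega> \<in> space M. t \<omega> > Tb/2}"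
  have sum1: "pl + pe + pg = 1"
  proof -
    have "space M = {\<omega> \<in> space M. z \<omega> < n} \<union> {\<omega> \<in> space M. z \<omega> = n} \<union> {\<omega> \<in> space M. n < z \<omega>}"
      by auto
    then have "1 = measure M ({\<omega> \<in> space M. z \<omega> < n} \<union> {\<omega> \<in> space M. z \<omega> = n} \<union> {\<omega> \<in> space M. n < z \<omega>})"
      using P.prob_space by simp
    also have "\<dots> = pl + pe + pg" unfolding pl_def pe_def pg_def
      by (subst P.finite_measure_Union, (intro zs sets.Un)+, force)+ simp
    finally show ?thesis by simp
  qed
  have B1: "{0::real} \<times> (UNIV::real set) \<in> sets borel"
    by (intro borel_closed closed_Times) auto
  have B3: "(-{0::real}) \<times> (UNIV::real set) \<in> sets borel"
    by (intro borel_open open_Times) auto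
  have B2: "{0::real} \<times> {Tb/2<..} \<in> sets borel"
  proof -
    have "{0::real} \<times> {Tb/2<..} = ({0} \<times> UNIV) \<inter> (UNIV \<times> {Tb/2<..})" by auto
    moreover have "(UNIV::real set) \<times> {Tb/2<..} \<in> sets borel"
      by (intro borel_open open_Times) auto
    ultimately show ?thesis using B1 by simp
  qed
  have m1: "measure M A1 = pl * (1/2)"
  proof -
    have "measure M {\<omega> \<in> space M. z \<omega> \<in> {k. k < n} \<and> (s \<omega>, t \<omega>) \<in> {0} \<times> UNIV}
      = measure M {\<omega> \<in> space M. z \<omega> \<in> {k. k < n}} * measure M {\<omega> \<in> space M. (s \<omega>, t \<omega>) \<in> {0} \<times> UNIV}"
      using iz B1 by blast
    moreover have "{\<omega> \<in> space M. z \<omega> \<in> {k. k < n} \<and> (s \<omega>, t \<omega>) \<in> {0} \<times> UNIV} = A1"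
      unfolding A1_def by auto
    ultimately show ?thesis unfolding pl_def using s0 by simp
  qed
  have m3: "measure M A3 = pg * (1/2)"
  proof -
    have "measure M {\<omega> \<in> space M. z \<omega> \<in> {k. n < k} \<and> (s \<omega>, t \<omega>) \<in> (-{0}) \<times> UNIV}
      = measure M {\<omega> \<in> space M. z \<omega> \<in> {k. n < k}} * measure M {\<omega> \<in> space M. (s \<omega>, t \<omega>) \<in> (-{0}) \<times> UNIV}"
      using iz B3 by blast
    moreover have "{\<omega> \<in> space M. z \<omega> \<in> {k. n < k} \<and> (s \<omega>, t \<omega>) \<in> (-{0}) \<times> UNIV} = A3"
      unfolding A3_def by auto
    moreover have "measure M {\<omega> \<in> space M. (s \<omega>, t \<omega>) \<in> (-{0}) \<times> UNIV} = 1/2"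
    proof -
      have "{\<omega> \<in> space M. (s \<omega>, t \<omega>) \<in> (-{0}) \<times> UNIV} = space M - {\<omega> \<in> space M. s \<omega> = 0}"
        by auto
      then show ?thesis using P.finite_measure_compl[OF s0s] P.prob_space s0 by simp
    qed
    ultimately show ?thesis unfolding pg_def by simp
  qed
  have m2: "measure M A2 = pe * ((1/2) * pt)"
  proof -
    have "measure M {\<omega> \<in> space M. z \<omega> \<in> {n} \<and> (s \<omega>, t \<omega>) \<in> {0} \<times> {Tb/2<..}}
      = measure M {\<omega> \<in> space M. z \<omega> \<in> {n}} * measure M {\<omega> \<in> space M. (s \<omega>, t \<omega>) \<in> {0} \<times> {Tb/2<..}}"
      using iz B2 by blast
    moreover have "{\<omega> \<in> space M. z \<omega> \<in> {n} \<and> (s \<omega>, t \<omega>) \<in> {0} \<times> {Tb/2<..}} = A2"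
      unfolding A2_def by auto
    moreover have "measure M {\<omega> \<in> space M. (s \<omega>, t \<omega>) \<in> {0} \<times> {Tb/2<..}} = (1/2) * pt"
    proof -
      have "P.prob ((\<lambda>x. (s x, t x)) -` ({0} \<times> {Tb/2<..}) \<inter> space M) =
         P.prob (s -` {0} \<inter> space M) * P.prob (t -` {Tb/2<..} \<inter> space M)"
        by (rule P.indep_varD[OF ist]) auto
      moreover have "(\<lambda>x. (s x, t x)) -` ({0} \<times> {Tb/2<..}) \<inter> space M = {\<omega> \<in> space M. (s \<omega>, t \<omega>) \<in> {0} \<times> {Tb/2<..}}"
        by auto
      moreover have "s -` {0} \<inter> space M = {\<omega> \<in> space M. s \<omega> = 0}" by auto
      moreover have "t -` {Tb/2<..} \<inter> space M = {\<omega> \<in> space M. t \<omega> > Tb/2}" by auto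
      ultimately show ?thesis using s0 unfolding pt_def by simp
    qed
    ultimately show ?thesis unfolding pe_def by simp
  qed
  have ph: "Phat M Tb t = 1/2 * pt" unfolding Phat_def pt_def by simp
  have "bit_error_rate M Tb n z s t = pl * (1/2) + pe * ((1/2) * pt) + pg * (1/2)"
    using mE m1 m2 m3 by simp
  also have "\<dots> = Phat M Tb t * pe + 1/2 * (1 - pe)"
    unfolding ph using sum1 by (simp add: algebra_simps)
  finally show ?thesis unfolding pe_def .
qed

theorem theorem6:
  fixes M :: "'a measure" and R Tb :: real and n :: nat
    and z :: "'a \<Rightarrow> nat" and s t :: "'a \<Rightarrow> real" and \<mu> \<sigma> :: real
  assumes h1: "prob_space M"
    and "R > 0" and "Tb = 1 / R"
    and "s \<in> borel_measurable M" and "t \<in> borel_measurable M"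
    and "z \<in> measurable M (count_space UNIV)"
    and "\<forall>\<omega>\<in>space M. s \<omega> = 0 \<or> s \<omega> = Tb / 2"
    and "measure M {\<omega> \<in> space M. s \<omega> = 0} = 1 / 2"
    and "\<forall>\<omega>\<in>space M. t \<omega> > 0"
    and "prob_space.indep_var M borel s borel t"
    and "\<forall>A B. B \<in> sets (borel :: (real \<times> real) measure) \<longrightarrow>
           measure M {\<omega> \<in> space M. z \<omega> \<in> A \<and> (s \<omega>, t \<omega>) \<in> B}
           = measure M {\<omega> \<in> space M. z \<omega> \<in> A} * measure M {\<omega> \<in> space M. (s \<omega>, t \<omega>) \<in> B}"
    and "integrable M (\<lambda>\<omega>. real (z \<omega>))"
    and "(\<integral>\<omega>. real (z \<omega>) \<partial>M) = \<mu>"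
    and "integrable M (\<lambda>\<omega>. (real (z \<omega>) - \<mu>)\<^sup>2)"
    and "(\<integral>\<omega>. (real (z \<omega>) - \<mu>)\<^sup>2 \<partial>M) = \<sigma>\<^sup>2"
    and "\<sigma> > 0"
    and "Phat M Tb t < 1 / 2"
  shows "bit_error_rate M Tb n z s t =
           Phat M Tb t * measure M {\<omega> \<in> space M. z \<omega> = n}
           + 1 / 2 * (1 - measure M {\<omega> \<in> space M. z \<omega> = n})
         \<and> (\<forall>x::real. approx_ber (Phat M Tb t) \<mu> \<sigma> \<mu> \<le> approx_ber (Phat M Tb t) \<mu> \<sigma> x)
         \<and> approx_ber (Phat M Tb t) \<mu> \<sigma> \<mu> =
           1 / 2 * (1 + (2 * Phat M Tb t - 1) * (1 - 2 * Qfun (1 / (2 * \<sigma>))))"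
proof -
  have ber_eq: "bit_error_rate M Tb n z s t =
           Phat M Tb t * measure M {\<omega> \<in> space M. z \<omega> = n}
           + 1 / 2 * (1 - measure M {\<omega> \<in> space M. z \<omega> = n})"
    by (rule ber[OF assms(1-11)])
  have sg: "\<sigma> > 0" using assms by simp
  have ph: "Phat M Tb t < 1/2" using assms by simp
  have ab: "approx_ber P \<mu> \<sigma> y = 1/2 + (P - 1/2) * gauss_prob \<mu> \<sigma> y" for P y
    unfolding approx_ber_def by (simp add: algebra_simps)
  have mn: "\<forall>x::real. approx_ber (Phat M Tb t) \<mu> \<sigma> \<mu> \<le> approx_ber (Phat M Tb t) \<mu> \<sigma> x"
  proof
    fix x :: real
    have "(Phat M Tb t - 1/2) * gauss_prob \<mu> \<sigma> \<mu> \<le> (Phat M Tb t - 1/2) * gauss_prob \<mu> \<sigma> x"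
      using window_max[OF sg, of \<mu> x] ph by (intro mult_left_mono_neg) auto
    then show "approx_ber (Phat M Tb t) \<mu> \<sigma> \<mu> \<le> approx_ber (Phat M Tb t) \<mu> \<sigma> x"
      unfolding ab by simp
  qed
  have vl: "approx_ber (Phat M Tb t) \<mu> \<sigma> \<mu> =
           1 / 2 * (1 + (2 * Phat M Tb t - 1) * (1 - 2 * Qfun (1 / (2 * \<sigma>))))"
    unfolding ab center[OF sg] by (simp add: algebra_simps)
  show ?thesis using ber_eq mn vl by blast
qed

end
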